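(* If $\Gamma\in\mathcal S$ has vertices $v_1,\dots,v_n$, then $\left|\sum_{i=1}^n d(v_i)\right|\le 3n+1$.
   Context: A plumbing tree is a finite tree $\Gamma$ each of whose vertices $v$ carries an integer decoration $d(v)$. $\Gamma$ is minimal if no vertex has decoration $-1$. For $n\ge 1$ let $(\mathbb Z^n,Q_n)$ be the lattice with basis $E_1,\dots,E_n$ and $Q_n(E_i,E_j)=-\delta_{ij}$, and let $K=\sum_{i=1}^n E_i$. A plumbing tree $\Gamma$ on $n$ vertices is a symplectic plumbing tree if there is a map $\varphi$ (an embedding) from its vertex set to $\mathbb Z^n$ such that: for distinct vertices $v_1,v_2$, $Q_n(\varphi(v_1),\varphi(v_2))$ is $1$ if they are adjacent and $0$ otherwise; $Q_n(\varphi(v),\varphi(v))=d(v)$ for every $v$; and $Q_n(\varphi(v),K)+Q_n(\varphi(v),\varphi(v))=-2$ for every $v$. $\mathcal S$ is the set of minimal, connected symplectic plumbing trees. *)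

theory Defs
  imports Main
begin

definition simple_graph :: "'a set \<Rightarrow> ('a \<Rightarrow> 'a \<Rightarrow> bool) \<Rightarrow> bool" where
  "simple_graph V E \<longleftrightarrow> finite V \<and> (\<forall>u v. E u v \<longrightarrow> u \<in> V \<and> v \<in> V)
     \<and> (\<forall>u v. E u v \<longrightarrow> E v u) \<and> (\<forall>u. \<not> E u u)"

definition graph_edges :: "'a set \<Rightarrow> ('a \<Rightarrow> 'a \<Rightarrow> bool) \<Rightarrow> 'a set set" where
  "graph_edges V E = {{u, v} | u v. u \<in> V \<and> v \<in> V \<and> E u v}"

definition graph_connected :: "'a set \<Rightarrow> ('a \<Rightarrow> 'a \<Rightarrow> bool) \<Rightarrow> bool" where
  "graph_connected V E \<longleftrightarrow> (\<forall>u\<in>V. \<forall>v\<in>V. (\<lambda>x y. x \<in> V \<and> y \<in> V \<and> E x y)\<^sup>*\<^sup>* u v)"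

definition is_tree :: "'a set \<Rightarrow> ('a \<Rightarrow> 'a \<Rightarrow> bool) \<Rightarrow> bool" where
  "is_tree V E \<longleftrightarrow> simple_graph V E \<and> V \<noteq> {} \<and> graph_connected V E
     \<and> card (graph_edges V E) = card V - 1"

(* The lattice (Z^n, Q_n): vectors are functions nat => int supported in {0..<n} *)
definition lattice_vec :: "nat \<Rightarrow> (nat \<Rightarrow> int) \<Rightarrow> bool" where
  "lattice_vec n x \<longleftrightarrow> (\<forall>i\<ge>n. x i = 0)"

definition Qn :: "nat \<Rightarrow> (nat \<Rightarrow> int) \<Rightarrow> (nat \<Rightarrow> int) \<Rightarrow> int" where
  "Qn n x y = - (\<Sum>i<n. x i * y i)"

definition canK :: "nat \<Rightarrow> nat \<Rightarrow> int" where
  "canK n = (\<lambda>i. if i < n then 1 else 0)"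

definition symplectic_embedding ::
  "'a set \<Rightarrow> ('a \<Rightarrow> 'a \<Rightarrow> bool) \<Rightarrow> ('a \<Rightarrow> int) \<Rightarrow> ('a \<Rightarrow> nat \<Rightarrow> int) \<Rightarrow> bool" where
  "symplectic_embedding V E d \<phi> \<longleftrightarrow>
     (let n = card V in
       (\<forall>v\<in>V. lattice_vec n (\<phi> v))
     \<and> (\<forall>v1\<in>V. \<forall>v2\<in>V. v1 \<noteq> v2 \<longrightarrow> Qn n (\<phi> v1) (\<phi> v2) = (if E v1 v2 then 1 else 0))
     \<and> (\<forall>v\<in>V. Qn n (\<phi> v) (\<phi> v) = d v)
     \<and> (\<forall>v\<in>V. Qn n (\<phi> v) (canK n) + Qn n (\<phi> v) (\<phi> v) = -2))"

definition symplectic_plumbing_tree :: "'a set \<Rightarrow> ('a \<Rightarrow> 'a \<Rightarrow> bool) \<Rightarrow> ('a \<Rightarrow> int) \<Rightarrow> bool" where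
  "symplectic_plumbing_tree V E d \<longleftrightarrow> is_tree V E \<and> (\<exists>\<phi>. symplectic_embedding V E d \<phi>)"

definition minimal_plumbing :: "'a set \<Rightarrow> ('a \<Rightarrow> int) \<Rightarrow> bool" where
  "minimal_plumbing V d \<longleftrightarrow> (\<forall>v\<in>V. d v \<noteq> -1)"

definition in_S :: "'a set \<Rightarrow> ('a \<Rightarrow> 'a \<Rightarrow> bool) \<Rightarrow> ('a \<Rightarrow> int) \<Rightarrow> bool" where
  "in_S V E d \<longleftrightarrow> minimal_plumbing V d \<and> graph_connected V E \<and> symplectic_plumbing_tree V E d"

end

theory Submission
  imports Defs
begin

lemma cs_int:
  fixes S :: "nat \<Rightarrow> int"
  shows "(\<Sum>i<n. S i)^2 \<le> int n * (\<Sum>i<n. S i * S i)"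
proof -
  let ?Q = "\<Sum>i<n. S i * S i" and ?T = "\<Sum>i<n. S i"
  have e: "\<And>i j. (S i - S j)^2 = S i * S i + S j * S j - 2 * (S i * S j)"
    by (simp add: power2_eq_square algebra_simps)
  have a: "(\<Sum>i<n. \<Sum>j<n. S i * S i) = int n * ?Q"
    by (simp add: sum_distrib_left)
  have b: "(\<Sum>i<n. \<Sum>j<n. S j * S j) = int n * ?Q"
    by simp
  have c: "(\<Sum>i<n. \<Sum>j<n. 2 * (S i * S j)) = 2 * ?T^2"
    by (simp add: power2_eq_square sum_distrib_left sum_distrib_right mult.commute)
  have "(\<Sum>i<n. \<Sum>j<n. (S i - S j)^2) = (\<Sum>i<n. \<Sum>j<n. S i * S i + S j * S j - 2 * (S i * S j))"
    by (simp only: e)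
  also have "\<dots> = 2 * (int n * ?Q) - 2 * ?T^2"
    by (simp only: sum_subtractf sum.distrib a b c)
  finally have "2 * (int n * ?Q) - 2 * ?T^2 \<ge> 0"
    by (metis (no_types, lifting) sum_nonneg zero_le_power2)
  then show ?thesis by simp
qed

lemma pairs_ge:
  assumes "simple_graph V E"
  shows "2 * card (graph_edges V E) \<le> card {p \<in> V \<times> V. E (fst p) (snd p)}"
proof -
  let ?D = "{p \<in> V \<times> V. E (fst p) (snd p)}"
  let ?f = "\<lambda>p. {fst p, snd p}"
  have fin: "finite V" using assms by (simp add: simple_graph_def)
  have finD: "finite ?D" using fin by simp
  have ge: "graph_edges V E = ?f ` ?D"
    unfolding graph_edges_def by (auto simp: image_def)
  have "card ?D = (\<Sum>e\<in>?f ` ?D. card {p \<in> ?D. ?f p = e})"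
    using sum.image_gen[OF finD, of "\<lambda>_. 1::nat" ?f] by simp
  also have "\<dots> \<ge> (\<Sum>e\<in>?f ` ?D. 2)"
  proof (rule sum_mono)
    fix e assume "e \<in> ?f ` ?D"
    then obtain u v where uv: "u \<in> V" "v \<in> V" "E u v" "e = {u, v}" by auto
    have "u \<noteq> v" using uv assms by (auto simp: simple_graph_def)
    have "E v u" using uv assms by (auto simp: simple_graph_def)
    have "{(u,v),(v,u)} \<subseteq> {p \<in> ?D. ?f p = e}" using uv \<open>E v u\<close> by auto
    moreover have "finite {p \<in> ?D. ?f p = e}" by (rule finite_subset[OF _ finD]) auto
    ultimately have "card {(u,v),(v,u)} \<le> card {p \<in> ?D. ?f p = e}" by (rule card_mono[rotated])
    then show "2 \<le> card {p \<in> ?D. ?f p = e}" using \<open>u \<noteq> v\<close> by simp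
  qed
  finally show ?thesis using ge by simp
qed

theorem corollary3p3:
  fixes V :: "'a set" and E :: "'a \<Rightarrow> 'a \<Rightarrow> bool" and d :: "'a \<Rightarrow> int"
  assumes "in_S V E d"
  shows "\<bar>\<Sum>v\<in>V. d v\<bar> \<le> 3 * int (card V) + 1"
proof -
  define n where "n = card V"
  have tree: "is_tree V E" and "\<exists>\<phi>. symplectic_embedding V E d \<phi>"
    using assms by (auto simp: in_S_def symplectic_plumbing_tree_def)
  then obtain x where emb: "symplectic_embedding V E d x" by blast
  have sg: "simple_graph V E" and ne: "V \<noteq> {}" and ec: "card (graph_edges V E) = n - 1"
    using tree by (auto simp: is_tree_def n_def)
  have fin: "finite V" using sg by (simp add: simple_graph_def)
  have irr: "\<And>u. \<not> E u u" using sg by (simp add: simple_graph_def)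
  have h1: "\<And>v. v \<in> V \<Longrightarrow> (\<Sum>i<n. x v i * x v i) = - d v"
    using emb by (auto simp: symplectic_embedding_def Let_def Qn_def n_def)
  have h2: "\<And>v. v \<in> V \<Longrightarrow> (\<Sum>i<n. x v i) = 2 + d v"
  proof -
    fix v assume v: "v \<in> V"
    have "Qn n (x v) (canK n) + Qn n (x v) (x v) = -2"
      using emb v by (auto simp: symplectic_embedding_def Let_def n_def)
    moreover have "Qn n (x v) (canK n) = - (\<Sum>i<n. x v i)"
      by (simp add: Qn_def canK_def)
    moreover have "Qn n (x v) (x v) = d v"
      using emb v by (auto simp: symplectic_embedding_def Let_def n_def)
    ultimately show "(\<Sum>i<n. x v i) = 2 + d v" by simp
  qed
  have h3: "\<And>v w. v \<in> V \<Longrightarrow> w \<in> V \<Longrightarrow> v \<noteq> w \<Longrightarrow>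
      (\<Sum>i<n. x v i * x w i) = (if E v w then -1 else 0)"
  proof -
    fix v w assume vw: "v \<in> V" "w \<in> V" "v \<noteq> w"
    have "Qn n (x v) (x w) = (if E v w then 1 else 0)"
      using emb vw by (simp add: symplectic_embedding_def Let_def n_def)
    then show "(\<Sum>i<n. x v i * x w i) = (if E v w then -1 else 0)"
      by (simp add: Qn_def split: if_splits)
  qed
  define A where "A = (\<Sum>v\<in>V. \<Sum>i<n. x v i * x v i)"
  have sumd: "(\<Sum>v\<in>V. d v) = - A"
    unfolding A_def using h1 by (simp add: sum_negf[symmetric])
  have Anon: "A \<ge> 0" unfolding A_def by (intro sum_nonneg) auto
  define S where "S = (\<lambda>i. \<Sum>v\<in>V. x v i)"
  have T: "(\<Sum>i<n. S i) = 2 * int n - A"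
  proof -
    have "(\<Sum>i<n. S i) = (\<Sum>v\<in>V. \<Sum>i<n. x v i)" unfolding S_def by (rule sum.swap)
    also have "\<dots> = (\<Sum>v\<in>V. 2 + d v)" using h2 by simp
    also have "\<dots> = 2 * int n + (\<Sum>v\<in>V. d v)" by (simp add: sum.distrib n_def)
    finally show ?thesis using sumd by simp
  qed
  define D where "D = {p \<in> V \<times> V. E (fst p) (snd p)}"
  have finD: "finite D" unfolding D_def using fin by simp
  have Q: "(\<Sum>i<n. S i * S i) = A - int (card D)"
  proof -
    have "(\<Sum>i<n. S i * S i) = (\<Sum>i<n. \<Sum>v\<in>V. \<Sum>w\<in>V. x v i * x w i)"
      unfolding S_def by (simp only: sum_product)
    also have "\<dots> = (\<Sum>v\<in>V. \<Sum>w\<in>V. \<Sum>i<n. x v i * x w i)"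
      by (simp add: sum.swap[of _ "{..<n}"])
    also have "\<dots> = (\<Sum>v\<in>V. \<Sum>w\<in>V. (if v = w then (\<Sum>i<n. x v i * x v i) else 0)
        - (if E v w then 1 else 0))"
      by (intro sum.cong refl) (auto simp: h3 irr)
    also have "\<dots> = A - (\<Sum>v\<in>V. \<Sum>w\<in>V. (if E v w then 1 else 0))"
      unfolding A_def using fin by (simp add: sum_subtractf)
    also have "(\<Sum>v\<in>V. \<Sum>w\<in>V. (if E v w then 1 else 0)) = (\<Sum>p\<in>V \<times> V. (if E (fst p) (snd p) then 1 else (0::int)))"
      by (simp add: sum.cartesian_product case_prod_beta)
    also have "\<dots> = int (card D)"
      unfolding D_def using fin by (simp add: sum.If_cases Int_def)
    finally show ?thesis .
  qed
  have P: "2 * (int n - 1) \<le> int (card D)"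
    using pairs_ge[OF sg] ec ne fin unfolding D_def n_def
    by (simp add: card_gt_0_iff) 
  have cs: "(2 * int n - A)^2 \<le> int n * (A - int (card D))"
    using cs_int[of S n] T Q by simp
  have "A \<le> 3 * int n + 1"
  proof (rule ccontr)
    assume na: "\<not> ?thesis"
    define C where "C = A - 2 * int n"
    have C: "C \<ge> int n + 2" using na C_def by simp
    have "C * C \<le> int n * C + 2 * int n"
    proof -
      have e1: "(2*int n - A)^2 = C*C" by (simp add: C_def power2_eq_square algebra_simps)
      have e2: "int n * (A - int (card D)) = int n * C + 2 * (int n * int n) - int n * int (card D)"
        by (simp add: C_def algebra_simps)
      have m: "int n * (2*int n - 2) \<le> int n * int (card D)"
        by (rule mult_left_mono) (use P in auto)
      have e3: "int n * (2*int n - 2) = 2 * (int n * int n) - 2 * int n"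
        by (simp add: algebra_simps)
      show ?thesis using cs e1 e2 m e3 by linarith
    qed
    moreover have "C * C \<ge> (int n + 2) * C"
      using C by (intro mult_right_mono) auto
    ultimately show False using C by (simp add: algebra_simps)
  qed
  then show ?thesis using sumd Anon n_def by simp
qed

end
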